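(* The locus of the nine-point center $X_5$ (triangle center function $h=s_2s_3\,[s_1^2(s_2^2+s_3^2)-(s_2^2-s_3^2)^2]$) over the 3-periodics of $E$ is the ellipse $x^2/a_5^2+y^2/b_5^2=1$, where $$a_5=\frac{-w_5'(a,b)+w_5''(a,b)\,\delta}{w_5(a,b)},\qquad b_5=\frac{w_5'(b,a)-w_5''(b,a)\,\delta}{w_5(b,a)},$$ with $w_5'(u,v)=u^2(u^2+3v^2)$, $w_5''(u,v)=3u^2+v^2$, $w_5(u,v)=4u(u^2-v^2)$.
   Context: Fix real numbers $a>b>0$, let $E$ be the ellipse $x^2/a^2+y^2/b^2=1$ and $\delta=\sqrt{a^4-a^2b^2+b^4}$. A 3-periodic is a non-degenerate triangle $P_1P_2P_3$ with all vertices on $E$ such that at each vertex $P_j$ the normal line to $E$ at $P_j$ bisects the interior angle of the triangle at $P_j$. For a triangle let $s_1=|P_2P_3|$, $s_2=|P_3P_1|$, $s_3=|P_1P_2|$. Given a triangle center function $h(s_1,s_2,s_3)$, the center $X_h$ is the point with trilinears $p:q:r=h(s_1,s_2,s_3):h(s_2,s_3,s_1):h(s_3,s_1,s_2)$, i.e. the Cartesian point $\dfrac{p s_1P_1+q s_2P_2+r s_3P_3}{p s_1+q s_2+r s_3}$. The locus of $X_h$ is the set of points $X_h(T)$ over all 3-periodics $T$. *)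

theory Defs
  imports "HOL-Analysis.Analysis"
begin

type_synonym pt = "real \<times> real"

definition on_ellipse :: "real \<Rightarrow> real \<Rightarrow> pt \<Rightarrow> bool" where
  "on_ellipse a b P \<longleftrightarrow> (fst P)^2 / a^2 + (snd P)^2 / b^2 = 1"

definition nondegenerate :: "pt \<Rightarrow> pt \<Rightarrow> pt \<Rightarrow> bool" where
  "nondegenerate P1 P2 P3 \<longleftrightarrow>
     (fst P2 - fst P1) * (snd P3 - snd P1) - (snd P2 - snd P1) * (fst P3 - fst P1) \<noteq> 0"

text \<open>The normal line to the ellipse at P (direction (x/a^2, y/b^2)) contains the internal
  angle bisector of the triangle at vertex P, whose other vertices are Q and R; the internal
  bisector direction is the sum of the unit vectors from P towards Q and towards R.\<close>
definition normal_bisects :: "real \<Rightarrow> real \<Rightarrow> pt \<Rightarrow> pt \<Rightarrow> pt \<Rightarrow> bool" where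
  "normal_bisects a b P Q R \<longleftrightarrow>
     (let n = (fst P / a^2, snd P / b^2);
          u = inverse (dist Q P) *\<^sub>R (Q - P) + inverse (dist R P) *\<^sub>R (R - P)
      in fst n * snd u - snd n * fst u = 0)"

definition three_periodic :: "real \<Rightarrow> real \<Rightarrow> pt \<Rightarrow> pt \<Rightarrow> pt \<Rightarrow> bool" where
  "three_periodic a b P1 P2 P3 \<longleftrightarrow>
     nondegenerate P1 P2 P3 \<and>
     on_ellipse a b P1 \<and> on_ellipse a b P2 \<and> on_ellipse a b P3 \<and>
     normal_bisects a b P1 P2 P3 \<and> normal_bisects a b P2 P3 P1 \<and> normal_bisects a b P3 P1 P2"

text \<open>Triangle center with trilinears h(s1,s2,s3):h(s2,s3,s1):h(s3,s1,s2).\<close>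
definition tri_center :: "(real \<Rightarrow> real \<Rightarrow> real \<Rightarrow> real) \<Rightarrow> pt \<Rightarrow> pt \<Rightarrow> pt \<Rightarrow> pt" where
  "tri_center h P1 P2 P3 =
     (let s1 = dist P2 P3; s2 = dist P3 P1; s3 = dist P1 P2;
          p = h s1 s2 s3; q = h s2 s3 s1; r = h s3 s1 s2
      in inverse (p * s1 + q * s2 + r * s3) *\<^sub>R
           ((p * s1) *\<^sub>R P1 + (q * s2) *\<^sub>R P2 + (r * s3) *\<^sub>R P3))"

definition locus :: "(real \<Rightarrow> real \<Rightarrow> real \<Rightarrow> real) \<Rightarrow> real \<Rightarrow> real \<Rightarrow> pt set" where
  "locus h a b = {tri_center h P1 P2 P3 | P1 P2 P3. three_periodic a b P1 P2 P3}"

definition h5 :: "real \<Rightarrow> real \<Rightarrow> real \<Rightarrow> real" where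
  "h5 s1 s2 s3 = s2 * s3 * (s1^2 * (s2^2 + s3^2) - (s2^2 - s3^2)^2)"

definition delta :: "real \<Rightarrow> real \<Rightarrow> real" where
  "delta a b = sqrt (a^4 - a^2 * b^2 + b^4)"

definition w5' :: "real \<Rightarrow> real \<Rightarrow> real" where "w5' u v = u^2 * (u^2 + 3 * v^2)"
definition w5'' :: "real \<Rightarrow> real \<Rightarrow> real" where "w5'' u v = 3 * u^2 + v^2"
definition w5 :: "real \<Rightarrow> real \<Rightarrow> real" where "w5 u v = 4 * u * (u^2 - v^2)"

end

theory Submission
  imports Defs
begin



lemma cross_lemma:
  fixes n1 n2 e1x e1y e2x e2y :: real
  assumes "e1x^2+e1y^2=1" "e2x^2+e2y^2=1" "e1x*e2y - e1y*e2x \<noteq> 0"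
  shows "n1*(e1y+e2y) - n2*(e1x+e2x) = 0 \<longleftrightarrow> n1*(e1x-e2x) + n2*(e1y-e2y) = 0"
proof -
  let ?v1 = "e1x+e2x" and ?v2 = "e1y+e2y" and ?m1 = "e1x-e2x" and ?m2="e1y-e2y"
  have vm: "?v1*?m1 + ?v2*?m2 = 0" using assms(1,2) by algebra
  have cvm: "?v1*?m2 - ?v2*?m1 = -2*(e1x*e2y - e1y*e2x)" by algebra
  have key: "(n1*?m1 + n2*?m2)*(?v1^2+?v2^2) = (?v1*n2 - ?v2*n1)*(?v1*?m2 - ?v2*?m1)"
    using vm by algebra
  have cnz: "?v1*?m2 - ?v2*?m1 \<noteq> 0" using cvm assms(3) by simp
  have vnz: "?v1^2+?v2^2 \<noteq> 0"
  proof
    assume "?v1^2+?v2^2 = 0"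
    then have "?v1 = 0" "?v2 = 0" by (simp_all add: sum_power2_eq_zero_iff)
    then show False using cnz by simp
  qed
  show ?thesis
  proof
    assume "n1*(e1y+e2y) - n2*(e1x+e2x) = 0"
    then have "(?v1*n2 - ?v2*n1) = 0" by (simp add: algebra_simps)
    then have "(n1*?m1 + n2*?m2)*(?v1^2+?v2^2) = 0" using key by simp
    then show "n1*?m1 + n2*?m2 = 0" using vnz by (metis mult_eq_0_iff)
  next
    assume "n1*?m1 + n2*?m2 = 0"
    then have "(?v1*n2 - ?v2*n1)*(?v1*?m2 - ?v2*?m1) = 0" using key by simp
    then have "?v1*n2 - ?v2*n1 = 0" using cnz by simp
    then show "n1*(e1y+e2y) - n2*(e1x+e2x) = 0" by (simp add: algebra_simps)
  qed
qed

lemma dist_pt: "dist ((p::real),(q::real)) (r,s) = sqrt ((p-r)^2+(q-s)^2)"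
  by (simp add: dist_Pair_Pair dist_real_def)

lemma nb_iff:
  fixes a b x y qx qy rx ry :: real
  assumes a: "a \<noteq> 0" and b: "b \<noteq> 0" and E: "x^2/a^2 + y^2/b^2 = 1"
    and nd: "(qx-x)*(ry-y) - (qy-y)*(rx-x) \<noteq> 0"
  shows "normal_bisects a b (x,y) (qx,qy) (rx,ry) \<longleftrightarrow>
     (x*qx/a^2 + y*qy/b^2 - 1)/dist (qx,qy) (x,y) = (x*rx/a^2 + y*ry/b^2 - 1)/dist (rx,ry) (x,y)"
proof -
  define sQ where "sQ = dist (qx,qy) (x,y)"
  define sR where "sR = dist (rx,ry) (x,y)"
  have sQ2: "sQ^2 = (qx-x)^2+(qy-y)^2" unfolding sQ_def dist_pt by simp
  have sR2: "sR^2 = (rx-x)^2+(ry-y)^2" unfolding sR_def dist_pt by simp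
  have sQ0: "sQ > 0"
  proof -
    have "(qx,qy) \<noteq> (x,y)" using nd by auto
    then show ?thesis unfolding sQ_def by simp
  qed
  have sR0: "sR > 0"
  proof -
    have "(rx,ry) \<noteq> (x,y)" using nd by auto
    then show ?thesis unfolding sR_def by simp
  qed
  define e1x where "e1x = (qx-x)/sQ"
  define e1y where "e1y = (qy-y)/sQ"
  define e2x where "e2x = (rx-x)/sR"
  define e2y where "e2y = (ry-y)/sR"
  have "e1x^2+e1y^2 = ((qx-x)^2+(qy-y)^2)/sQ^2" unfolding e1x_def e1y_def
    by (simp add: power_divide add_divide_distrib)
  also have "\<dots> = 1" unfolding sQ2[symmetric] using sQ0 by simp
  finally have u1: "e1x^2+e1y^2=1" .
  have "e2x^2+e2y^2 = ((rx-x)^2+(ry-y)^2)/sR^2" unfolding e2x_def e2y_def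
    by (simp add: power_divide add_divide_distrib)
  also have "\<dots> = 1" unfolding sR2[symmetric] using sR0 by simp
  finally have u2: "e2x^2+e2y^2=1" .
  have cr: "e1x*e2y - e1y*e2x = ((qx-x)*(ry-y) - (qy-y)*(rx-x))/(sQ * sR)"
    unfolding e1x_def e1y_def e2x_def e2y_def using sQ0 sR0 by (simp add: field_simps)
  have crnz: "e1x*e2y - e1y*e2x \<noteq> 0" using cr nd sQ0 sR0 by simp
  have lhs: "normal_bisects a b (x,y) (qx,qy) (rx,ry) \<longleftrightarrow>
      (x/a^2)*(e1y+e2y) - (y/b^2)*(e1x+e2x) = 0"
    unfolding normal_bisects_def Let_def e1x_def e1y_def e2x_def e2y_def sQ_def sR_def
    by (simp add: divide_inverse algebra_simps)
  have d1: "(x/a^2)*e1x + (y/b^2)*e1y = (x*qx/a^2 + y*qy/b^2 - 1)/sQ"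
  proof -
    have "(x/a^2)*e1x + (y/b^2)*e1y = ((x*qx/a^2 + y*qy/b^2) - (x^2/a^2+y^2/b^2))/sQ"
      unfolding e1x_def e1y_def using a b sQ0 by (simp add: field_simps power2_eq_square)
    then show ?thesis using E by simp
  qed
  have d2: "(x/a^2)*e2x + (y/b^2)*e2y = (x*rx/a^2 + y*ry/b^2 - 1)/sR"
  proof -
    have "(x/a^2)*e2x + (y/b^2)*e2y = ((x*rx/a^2 + y*ry/b^2) - (x^2/a^2+y^2/b^2))/sR"
      unfolding e2x_def e2y_def using a b sR0 by (simp add: field_simps power2_eq_square)
    then show ?thesis using E by simp
  qed
  have "(x/a^2)*(e1y+e2y) - (y/b^2)*(e1x+e2x) = 0 \<longleftrightarrow>
        (x/a^2)*(e1x-e2x) + (y/b^2)*(e1y-e2y) = 0"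
    by (rule cross_lemma[OF u1 u2 crnz])
  also have "\<dots> \<longleftrightarrow> (x/a^2)*e1x + (y/b^2)*e1y = (x/a^2)*e2x + (y/b^2)*e2y"
    by (smt (verit, best) right_diff_distrib)
  finally show ?thesis using lhs d1 d2 unfolding sQ_def sR_def by simp
qed




lemma I6a: fixes x1 y1 x2 y2 x3 y3 r :: real
  assumes "x1^2+y1^2=r" "x2^2+y2^2=r" "x3^2+y3^2=r"
  shows "((x2-x3)^2+(y2-y3)^2)*(((x2-x3)^2+(y2-y3)^2)-((x3-x1)^2+(y3-y1)^2)-((x1-x2)^2+(y1-y2)^2))
     = -4*((x2-x1)*(y3-y1)-(y2-y1)*(x3-x1))*(x2*y3-y2*x3)"
proof -
  have "((x2-x3)^2+(y2-y3)^2)*(((x2-x3)^2+(y2-y3)^2)-((x3-x1)^2+(y3-y1)^2)-((x1-x2)^2+(y1-y2)^2))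
     - (-4*((x2-x1)*(y3-y1)-(y2-y1)*(x3-x1))*(x2*y3-y2*x3))
   = (4*x2*x3 - 2*x2^2 - 2*x3^2 + 4*y2*y3 - 2*y2^2 - 2*y3^2)*(x1^2+y1^2-r)
   + (-2*r + 2*x1*x2 - 2*x1*x3 - 2*x2*x3 + 4*x3^2 + 2*y1*y2 - 2*y1*y3 - 2*y2*y3 + 4*y3^2)*(x2^2+y2^2-r)
   + (2*r - 2*x1*x2 + 2*x1*x3 - 2*x2*x3 - 2*y1*y2 + 2*y1*y3 - 2*y2*y3)*(x3^2+y3^2-r)"
    by algebra
  then show ?thesis using assms by simp
qed

definition ff :: "real \<Rightarrow> real \<Rightarrow> real \<Rightarrow> real" where
  "ff A B C = A*(B+C) - (B-C)^2"

lemma L1q: fixes q1 r1 q2 r2 q3 r3 rr :: real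
  assumes "q1^2+r1^2=rr" "q2^2+r2^2=rr" "q3^2+r3^2=rr"
  defines "S1 \<equiv> (q2-q3)^2+(r2-r3)^2" and "S2 \<equiv> (q3-q1)^2+(r3-r1)^2" and "S3 \<equiv> (q1-q2)^2+(r1-r2)^2"
  defines "F \<equiv> ff S1 S2 S3 + ff S2 S3 S1 + ff S3 S1 S2"
  shows "ff S1 S2 S3 * q1 + ff S2 S3 S1 * q2 + ff S3 S1 S2 * q3 = F*(q1+q2+q3)/2"
    and "ff S1 S2 S3 * r1 + ff S2 S3 S1 * r2 + ff S3 S1 S2 * r3 = F*(r1+r2+r3)/2"
proof -
  define De where "De = (q2-q1)*(r3-r1)-(r2-r1)*(q3-q1)"
  have h1: "S1*(S1-S2-S3) = -4*De*(q2*r3-r2*q3)"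
    unfolding S1_def S2_def S3_def De_def by (rule I6a[OF assms(1-3)])
  have h2: "S2*(S2-S3-S1) = -4*De*(q3*r1-r3*q1)"
  proof -
    have "S2*(S2-S3-S1) = -4*((q3-q2)*(r1-r2)-(r3-r2)*(q1-q2))*(q3*r1-r3*q1)"
      unfolding S1_def S2_def S3_def by (rule I6a[OF assms(2,3,1)])
    moreover have "(q3-q2)*(r1-r2)-(r3-r2)*(q1-q2) = De" unfolding De_def by algebra
    ultimately show ?thesis by simp
  qed
  have h3: "S3*(S3-S1-S2) = -4*De*(q1*r2-r1*q2)"
  proof -
    have "S3*(S3-S1-S2) = -4*((q1-q3)*(r2-r3)-(r1-r3)*(q2-q3))*(q1*r2-r1*q2)"
      unfolding S1_def S2_def S3_def by (rule I6a[OF assms(3,1,2)])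
    moreover have "(q1-q3)*(r2-r3)-(r1-r3)*(q2-q3) = De" unfolding De_def by algebra
    ultimately show ?thesis by simp
  qed
  have e1: "ff S1 S2 S3 - F/2 = S1*(S1-S2-S3)" unfolding F_def ff_def by algebra
  have e2: "ff S2 S3 S1 - F/2 = S2*(S2-S3-S1)" unfolding F_def ff_def by algebra
  have e3: "ff S3 S1 S2 - F/2 = S3*(S3-S1-S2)" unfolding F_def ff_def by algebra
  have "ff S1 S2 S3 * q1 + ff S2 S3 S1 * q2 + ff S3 S1 S2 * q3 - F*(q1+q2+q3)/2
     = (ff S1 S2 S3 - F/2)*q1 + (ff S2 S3 S1 - F/2)*q2 + (ff S3 S1 S2 - F/2)*q3"
    by (simp add: algebra_simps)
  also have "\<dots> = -4*De*((q2*r3-r2*q3)*q1 + (q3*r1-r3*q1)*q2 + (q1*r2-r1*q2)*q3)"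
    unfolding e1 e2 e3 h1 h2 h3 by (simp add: algebra_simps)
  also have "\<dots> = 0" by algebra
  finally show "ff S1 S2 S3 * q1 + ff S2 S3 S1 * q2 + ff S3 S1 S2 * q3 = F*(q1+q2+q3)/2" by simp
  have "ff S1 S2 S3 * r1 + ff S2 S3 S1 * r2 + ff S3 S1 S2 * r3 - F*(r1+r2+r3)/2
     = (ff S1 S2 S3 - F/2)*r1 + (ff S2 S3 S1 - F/2)*r2 + (ff S3 S1 S2 - F/2)*r3"
    by (simp add: algebra_simps)
  also have "\<dots> = -4*De*((q2*r3-r2*q3)*r1 + (q3*r1-r3*q1)*r2 + (q1*r2-r1*q2)*r3)"
    unfolding e1 e2 e3 h1 h2 h3 by (simp add: algebra_simps)
  also have "\<dots> = 0" by algebra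
  finally show "ff S1 S2 S3 * r1 + ff S2 S3 S1 * r2 + ff S3 S1 S2 * r3 = F*(r1+r2+r3)/2" by simp
qed

lemma heron: fixes x1 y1 x2 y2 x3 y3 :: real
  defines "A \<equiv> (x2-x3)^2+(y2-y3)^2" and "B \<equiv> (x3-x1)^2+(y3-y1)^2" and "C \<equiv> (x1-x2)^2+(y1-y2)^2"
  shows "ff A B C + ff B C A + ff C A B = 8*((x2-x1)*(y3-y1)-(y2-y1)*(x3-x1))^2"
  unfolding A_def B_def C_def ff_def by algebra



lemma tri_center_h5:
  fixes x1 y1 x2 y2 x3 y3 ox oy :: real
  assumes nd: "(x2-x1)*(y3-y1)-(y2-y1)*(x3-x1) \<noteq> 0"
    and o1: "(x1-ox)^2+(y1-oy)^2 = (x2-ox)^2+(y2-oy)^2"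
    and o2: "(x1-ox)^2+(y1-oy)^2 = (x3-ox)^2+(y3-oy)^2"
  shows "tri_center h5 (x1,y1) (x2,y2) (x3,y3) = ((x1+x2+x3-ox)/2, (y1+y2+y3-oy)/2)"
proof -
  define S1 where "S1 = (x2-x3)^2+(y2-y3)^2"
  define S2 where "S2 = (x3-x1)^2+(y3-y1)^2"
  define S3 where "S3 = (x1-x2)^2+(y1-y2)^2"
  define s1 where "s1 = dist (x2,y2) (x3,y3)"
  define s2 where "s2 = dist (x3,y3) (x1,y1)"
  define s3 where "s3 = dist (x1,y1) (x2,y2)"
  have s1S: "s1^2 = S1" unfolding s1_def S1_def dist_pt by simp
  have s2S: "s2^2 = S2" unfolding s2_def S2_def dist_pt by simp
  have s3S: "s3^2 = S3" unfolding s3_def S3_def dist_pt by simp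
  have s1p: "s1 > 0" unfolding s1_def using nd by (auto simp: algebra_simps)
  have s2p: "s2 > 0" unfolding s2_def using nd by (auto simp: algebra_simps)
  have s3p: "s3 > 0" unfolding s3_def using nd by (auto simp: algebra_simps)
  define F where "F = ff S1 S2 S3 + ff S2 S3 S1 + ff S3 S1 S2"
  have F8: "F = 8*((x2-x1)*(y3-y1)-(y2-y1)*(x3-x1))^2"
    unfolding F_def S1_def S2_def S3_def by (rule heron)
  have Fnz: "F \<noteq> 0" using F8 nd by simp
  have w1: "h5 s1 s2 s3 * s1 = (s1* s2* s3) * ff S1 S2 S3"
    unfolding h5_def ff_def s1S[symmetric] s2S[symmetric] s3S[symmetric] by algebra
  have w2: "h5 s2 s3 s1 * s2 = (s1* s2* s3) * ff S2 S3 S1"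
    unfolding h5_def ff_def s1S[symmetric] s2S[symmetric] s3S[symmetric] by algebra
  have w3: "h5 s3 s1 s2 * s3 = (s1* s2* s3) * ff S3 S1 S2"
    unfolding h5_def ff_def s1S[symmetric] s2S[symmetric] s3S[symmetric] by algebra
  define rr where "rr = (x1-ox)^2+(y1-oy)^2"
  have q1: "(x1-ox)^2+(y1-oy)^2 = rr" "(x2-ox)^2+(y2-oy)^2 = rr" "(x3-ox)^2+(y3-oy)^2 = rr"
    using o1 o2 unfolding rr_def by auto
  have SS1: "S1 = ((x2-ox)-(x3-ox))^2+((y2-oy)-(y3-oy))^2" unfolding S1_def by simp
  have SS2: "S2 = ((x3-ox)-(x1-ox))^2+((y3-oy)-(y1-oy))^2" unfolding S2_def by simp
  have SS3: "S3 = ((x1-ox)-(x2-ox))^2+((y1-oy)-(y2-oy))^2" unfolding S3_def by simp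
  have Lx: "ff S1 S2 S3 * (x1-ox) + ff S2 S3 S1 * (x2-ox) + ff S3 S1 S2 * (x3-ox)
     = F*((x1-ox)+(x2-ox)+(x3-ox))/2"
    unfolding F_def SS1 SS2 SS3 by (rule L1q(1)[OF q1])
  have Ly: "ff S1 S2 S3 * (y1-oy) + ff S2 S3 S1 * (y2-oy) + ff S3 S1 S2 * (y3-oy)
     = F*((y1-oy)+(y2-oy)+(y3-oy))/2"
    unfolding F_def SS1 SS2 SS3 by (rule L1q(2)[OF q1])
  have Lx': "ff S1 S2 S3 * x1 + ff S2 S3 S1 * x2 + ff S3 S1 S2 * x3 = F*(x1+x2+x3-ox)/2"
    using Lx unfolding F_def by (simp add: algebra_simps)
  have Ly': "ff S1 S2 S3 * y1 + ff S2 S3 S1 * y2 + ff S3 S1 S2 * y3 = F*(y1+y2+y3-oy)/2"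
    using Ly unfolding F_def by (simp add: algebra_simps)
  have sp: "s1* s2* s3 \<noteq> 0" using s1p s2p s3p by simp
  have den: "h5 s1 s2 s3 * s1 + h5 s2 s3 s1 * s2 + h5 s3 s1 s2 * s3 = (s1* s2* s3)*F"
    unfolding w1 w2 w3 F_def by (simp add: algebra_simps)
  have tc: "tri_center h5 (x1,y1) (x2,y2) (x3,y3) =
     (inverse (h5 s1 s2 s3 * s1 + h5 s2 s3 s1 * s2 + h5 s3 s1 s2 * s3) *
        (h5 s1 s2 s3 * s1 * x1 + h5 s2 s3 s1 * s2 * x2 + h5 s3 s1 s2 * s3 * x3),
      inverse (h5 s1 s2 s3 * s1 + h5 s2 s3 s1 * s2 + h5 s3 s1 s2 * s3) *
        (h5 s1 s2 s3 * s1 * y1 + h5 s2 s3 s1 * s2 * y2 + h5 s3 s1 s2 * s3 * y3))"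
    unfolding s1_def s2_def s3_def
    by (simp only: tri_center_def Let_def scaleR_Pair add_Pair real_scaleR_def fst_conv snd_conv)
  have "tri_center h5 (x1,y1) (x2,y2) (x3,y3) =
     (inverse ((s1 * s2 * s3)*F) * ((s1 * s2 * s3)*(ff S1 S2 S3 * x1 + ff S2 S3 S1 * x2 + ff S3 S1 S2 * x3)),
      inverse ((s1 * s2 * s3)*F) * ((s1 * s2 * s3)*(ff S1 S2 S3 * y1 + ff S2 S3 S1 * y2 + ff S3 S1 S2 * y3)))"
    unfolding tc den unfolding w1 w2 w3 by (simp add: algebra_simps)
  also have "\<dots> = ((x1+x2+x3-ox)/2, (y1+y2+y3-oy)/2)"
    unfolding Lx' Ly' using sp Fnz by (simp add: field_simps)
  finally show ?thesis .
qed




lemma vieta3: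
  fixes r1 r2 r3 c2 c1 c0 :: complex
  assumes d12: "r1 \<noteq> r2" and d13: "r1 \<noteq> r3" and d23: "r2 \<noteq> r3"
    and h1: "r1^3 + c2*r1^2 + c1*r1 + c0 = 0"
    and h2: "r2^3 + c2*r2^2 + c1*r2 + c0 = 0"
    and h3: "r3^3 + c2*r3^2 + c1*r3 + c0 = 0"
  shows "c2 = -(r1+r2+r3)" "c1 = r1*r2+r1*r3+r2*r3" "c0 = -(r1*r2*r3)"
proof -
  have "(r1-r2)*(r1^2+r1*r2+r2^2 + c2*(r1+r2) + c1) = 0" using h1 h2 by algebra
  then have A12: "r1^2+r1*r2+r2^2 + c2*(r1+r2) + c1 = 0" using d12 by simp
  have "(r1-r3)*(r1^2+r1*r3+r3^2 + c2*(r1+r3) + c1) = 0" using h1 h3 by algebra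
  then have A13: "r1^2+r1*r3+r3^2 + c2*(r1+r3) + c1 = 0" using d13 by simp
  have "(r2-r3)*(r1+r2+r3+c2) = 0" using A12 A13 by algebra
  then have B: "r1+r2+r3+c2 = 0" using d23 by simp
  show c2: "c2 = -(r1+r2+r3)" using B by algebra
  show c1: "c1 = r1*r2+r1*r3+r2*r3" using A12 c2 by algebra
  show "c0 = -(r1*r2*r3)" using h1 c1 c2 by algebra
qed

lemma F_real:
  fixes X Y X' Y' D S :: real
  assumes "X^2+Y^2=1" "X'^2+Y'^2=1"
  shows "of_real D*(Complex X Y)^2*(Complex X' Y')^2 - (Complex X Y)^2 - (Complex X' Y')^2
         + 2 * of_real S*(Complex X Y)*(Complex X' Y') + of_real D
       = 2*(Complex X Y)*(Complex X' Y')* of_real (D*(X*X'-Y*Y') - (X*X'+Y*Y') + S)"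
proof -
  have r: "D*((X^2-Y^2)*(X'^2-Y'^2) - 4*X*Y*X'*Y') - (X^2-Y^2) - (X'^2-Y'^2) + 2*S*(X*X'-Y*Y') + D
        = 2*(X*X'-Y*Y')*(D*(X*X'-Y*Y') - (X*X'+Y*Y') + S)"
    using assms by algebra
  have i: "D*((X^2-Y^2)*(2*X'*Y') + (2*X*Y)*(X'^2-Y'^2)) - 2*X*Y - 2*X'*Y' + 2*S*(X*Y'+Y*X')
        = 2*(X*Y'+Y*X')*(D*(X*X'-Y*Y') - (X*X'+Y*Y') + S)"
    using assms by algebra
  show ?thesis using r i
    by (simp add: complex_eq_iff power2_eq_square algebra_simps)
qed

lemma cnj_unit: "z * cnj z = 1 \<Longrightarrow> cnj z = inverse z"
  by (metis inverse_unique)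

lemma per_core:
  fixes u1 u2 u3 :: complex and D S :: real
  assumes d12: "u1 \<noteq> u2" and d13: "u1 \<noteq> u3" and d23: "u2 \<noteq> u3"
    and n1: "u1 * cnj u1 = 1" and n2: "u2 * cnj u2 = 1" and n3: "u3 * cnj u3 = 1"
    and D0: "D \<noteq> 0"
    and F12: "of_real D*u1^2*u2^2 - u1^2 - u2^2 + 2 * of_real S*u1*u2 + of_real D = 0"
    and F13: "of_real D*u1^2*u3^2 - u1^2 - u3^2 + 2 * of_real S*u1*u3 + of_real D = 0"
    and F23: "of_real D*u2^2*u3^2 - u2^2 - u3^2 + 2 * of_real S*u2*u3 + of_real D = 0"
  shows "1 + 2*S = D^2" "u1*u2+u1*u3+u2*u3 = - of_real D" "u1+u2+u3 = - of_real D * (u1*u2*u3)"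
proof -
  define e1 where "e1 = u1+u2+u3"
  define e2 where "e2 = u1*u2+u1*u3+u2*u3"
  define e3 where "e3 = u1*u2*u3"
  have "(u2-u3)*(of_real D*u1^2*(u2+u3) - (u2+u3) + 2 * of_real S*u1) = 0" using F12 F13 by algebra
  then have s1: "of_real D*u1^2*(u2+u3) - (u2+u3) + 2 * of_real S*u1 = 0" using d23 by simp
  have "(u1-u3)*(of_real D*u2^2*(u1+u3) - (u1+u3) + 2 * of_real S*u2) = 0" using F12 F23 by algebra
  then have s2: "of_real D*u2^2*(u1+u3) - (u1+u3) + 2 * of_real S*u2 = 0" using d13 by simp
  have "(u1-u2)*(of_real D*u3^2*(u1+u2) - (u1+u2) + 2 * of_real S*u3) = 0" using F13 F23 by algebra
  then have s3: "of_real D*u3^2*(u1+u2) - (u1+u2) + 2 * of_real S*u3 = 0" using d12 by simp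
  have Dc: "(of_real D::complex) \<noteq> 0" using D0 by simp
  define c2 where "c2 = - e1"
  define c1 where "c1 = - (1 + 2 * of_real S)/(of_real D :: complex)"
  define c0 where "c0 = e1 / of_real D"
  have g: "\<And>u. of_real D*u^2*(e1-u) - (e1-u) + 2 * of_real S*u = 0 \<Longrightarrow> u^3 + c2*u^2 + c1*u + c0 = 0"
  proof -
    fix u assume "of_real D*u^2*(e1-u) - (e1-u) + 2 * of_real S*u = 0"
    moreover have "(of_real D::complex)*(u^3 + c2*u^2 + c1*u + c0)
        = of_real D*u^3 - of_real D*e1*u^2 - (1 + 2 * of_real S)*u + e1"
      unfolding c2_def c1_def c0_def using Dc by (simp add: field_simps)
    ultimately have "(of_real D::complex)*(u^3 + c2*u^2 + c1*u + c0) = 0"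
      by (simp add: algebra_simps power3_eq_cube power2_eq_square)
    then show "u^3 + c2*u^2 + c1*u + c0 = 0" using Dc by simp
  qed
  have g1: "u1^3 + c2*u1^2 + c1*u1 + c0 = 0" by (rule g) (use s1 in \<open>simp add: e1_def algebra_simps\<close>)
  have g2: "u2^3 + c2*u2^2 + c1*u2 + c0 = 0" by (rule g) (use s2 in \<open>simp add: e1_def algebra_simps\<close>)
  have g3: "u3^3 + c2*u3^2 + c1*u3 + c0 = 0" by (rule g) (use s3 in \<open>simp add: e1_def algebra_simps\<close>)
  note V = vieta3[OF d12 d13 d23 g1 g2 g3]
  have e2v: "e2 = - (1 + 2 * of_real S)/of_real D" using V(2) unfolding c1_def e2_def by simp
  have e3v: "e1 = - of_real D * e3" using V(3) Dc unfolding c0_def e3_def by (simp add: field_simps)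
  have e2real: "cnj e2 = e2" unfolding e2v by simp
  have i1: "cnj u1 = inverse u1" "cnj u2 = inverse u2" "cnj u3 = inverse u3"
    using n1 n2 n3 cnj_unit by auto
  have nz: "u1 \<noteq> 0" "u2 \<noteq> 0" "u3 \<noteq> 0" using n1 n2 n3 by auto
  have "cnj e2 * e3 = e1"
  proof -
    have "cnj e2 * e3 = (cnj u1*cnj u2+cnj u1*cnj u3+cnj u2*cnj u3)*(u1*u2*u3)"
      unfolding e2_def e3_def by simp
    also have "\<dots> = e1" unfolding e1_def using n1 n2 n3 by algebra
    finally show ?thesis .
  qed
  then have "e2 * e3 = e1" using e2real by simp
  then have "e3 * (e2 + of_real D) = 0"
  proof -
    assume h: "e2 * e3 = e1"
    have "e3 * (e2 + of_real D) = e2*e3 + of_real D * e3" by (simp add: algebra_simps)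
    also have "\<dots> = 0" using h e3v by simp
    finally show ?thesis .
  qed
  moreover have "e3 \<noteq> 0" using nz unfolding e3_def by simp
  ultimately have e2D: "e2 = - of_real D" by (simp add: eq_neg_iff_add_eq_0)
  then have "- (1 + 2 * of_real S)/of_real D = (- of_real D :: complex)" using e2v by simp
  then have "(1 + 2 * of_real S :: complex) = of_real D^2" using Dc by (simp add: field_simps power2_eq_square)
  then have "complex_of_real (1 + 2*S) = complex_of_real (D^2)" by simp
  then show "1 + 2*S = D^2" using of_real_eq_iff by blast
  show "u1*u2+u1*u3+u2*u3 = - of_real D" using e2D unfolding e2_def .
  show "u1+u2+u3 = - of_real D * (u1*u2*u3)" using e3v unfolding e1_def e3_def .
qed



lemma coreF:
  fixes u1 u2 u3 w :: complex and D S :: complex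
  assumes e1: "u1+u2+u3 = D*w" and e2: "u1*u2+u1*u3+u2*u3 = -D" and e3: "u1*u2*u3 = -w"
    and S: "2*S = D^2 - 1"
  shows "D*u1^2*u2^2 - u1^2 - u2^2 + 2*S*u1*u2 + D = 0"
  using assms by algebra
lemma coref:
  fixes u1 u2 u3 w :: complex and D S :: complex
  assumes e1: "u1+u2+u3 = D*w" and e2: "u1*u2+u1*u3+u2*u3 = -D" and e3: "u1*u2*u3 = -w"
  shows "u1^3 - D*w*u1^2 - D*u1 + w = 0"
  using assms by algebra


lemma delta_sq: "delta a b ^2 = a^4 - a^2*b^2 + b^4" "delta a b \<ge> 0"
proof -
  have e: "a^4 - a^2*b^2 + b^4 = (a^2 - b^2/2)^2 + 3*b^4/4" by algebra
  have "(a^2 - b^2/2)^2 + 3*b^4/4 \<ge> 0" by (intro add_nonneg_nonneg) simp_all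
  then have nn: "a^4 - a^2*b^2 + b^4 \<ge> 0" using e by simp
  then show "delta a b ^2 = a^4 - a^2*b^2 + b^4" unfolding delta_def by simp
  show "delta a b \<ge> 0" unfolding delta_def using nn by simp
qed

lemma Dfacts:
  fixes a b D :: real
  assumes b0: "0 < b" and ba: "b < a" and DD: "D*(a^2-b^2) = 2*delta a b - a^2 - b^2"
  shows "0 < D" "D < 1" "D^2*(a^2-b^2) + 2*D*(a^2+b^2) - 3*(a^2-b^2) = 0"
proof -
  have ab2: "a^2 - b^2 > 0" using b0 ba by (simp add: power_strict_mono)
  have b2: "b^2 < a^2" using ab2 by simp
  note ds = delta_sq[of a b]
  have "(a^2+b^2)^2 < (2*delta a b)^2"
  proof -
    have "(2*delta a b)^2 - (a^2+b^2)^2 = 3*(a^2-b^2)^2" using ds(1) by (simp add: power_mult_distrib) (simp add: power2_eq_square power4_eq_xxxx algebra_simps)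
    moreover have "3*(a^2-b^2)^2 > 0" using ab2 by simp
    ultimately show ?thesis by linarith
  qed
  then have "a^2+b^2 < 2*delta a b" by (rule power_less_imp_less_base) (use ds(2) in simp)
  then have "D*(a^2-b^2) > 0" using DD by simp
  then show "0 < D" using ab2 by (simp add: zero_less_mult_iff)
  have "delta a b ^2 < (a^2)^2"
  proof -
    have "(a^2)^2 - delta a b ^2 = b^2*(a^2-b^2)" using ds(1) by algebra
    moreover have "b^2*(a^2-b^2) > 0" using ab2 b0 by simp
    ultimately show ?thesis by linarith
  qed
  then have "delta a b < a^2" by (rule power_less_imp_less_base) (use b0 in simp)
  then have "D*(a^2-b^2) < 1*(a^2-b^2)" using DD by simp
  then show "D < 1" using ab2 by simp
  have "(D*(a^2-b^2) + a^2 + b^2)^2 = 4*(a^4 - a^2*b^2 + b^4)"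
    using DD ds(1) by (simp add: power_mult_distrib)
  then have "(a^2-b^2)*(D^2*(a^2-b^2) + 2*D*(a^2+b^2) - 3*(a^2-b^2)) = 0" by algebra
  then show "D^2*(a^2-b^2) + 2*D*(a^2+b^2) - 3*(a^2-b^2) = 0" using ab2 by simp
qed



lemma I1: fixes X Y X' Y' a b :: real
  assumes "X^2+Y^2=1" "X'^2+Y'^2=1"
  shows "a^2*(X-X')^2+b^2*(Y-Y')^2 = (1-(X*X'+Y*Y'))*((a^2+b^2)-(a^2-b^2)*(X*X'-Y*Y'))"
  using assms by algebra

lemma I8: fixes x1 y1 x2 y2 x3 y3 :: real
  assumes "x1^2+y1^2=1" "x2^2+y2^2=1" "x3^2+y3^2=1"
  shows "4*((x2-x1)*(y3-y1)-(y2-y1)*(x3-x1))^2 = ((x2-x3)^2+(y2-y3)^2)*((x3-x1)^2+(y3-y1)^2)*((x1-x2)^2+(y1-y2)^2)"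
  using assms by algebra

lemma I5: fixes X Y W1 W2 D :: real
  assumes "X^2+Y^2=1" "W1^2+W2^2=1"
  and "(Complex X Y)^3 - of_real D*(Complex W1 W2)*(Complex X Y)^2 - of_real D*(Complex X Y) + Complex W1 W2 = 0"
  shows "2*X^2+(1-D)*W1*X+(1+D)*W2*Y = 1+D"
proof -
  from assms(3) have r: "X^3-3*X*Y^2 - D*(W1*(X^2-Y^2) - W2*2*X*Y) - D*X + W1 = 0"
     and i: "3*X^2*Y - Y^3 - D*(W1*2*X*Y + W2*(X^2-Y^2)) - D*Y + W2 = 0"
    by (simp_all add: complex_eq_iff power3_eq_cube power2_eq_square algebra_simps)
  show ?thesis using assms(1,2) r i by algebra
qed

lemma sum_sq_pos: "(x::real,y) \<noteq> (x',y') \<Longrightarrow> (x-x')^2+(y-y')^2 > 0"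
  by (auto simp: sum_power2_gt_zero_iff)

lemma pair_ratio:
  fixes a b D X Y X' Y' :: real
  assumes b0: "0 < b" and ba: "b < a" and D0: "0 < D"
    and Drel: "D^2*(a^2-b^2) + 2*D*(a^2+b^2) - 3*(a^2-b^2) = 0"
    and u: "X^2+Y^2=1" and u': "X'^2+Y'^2=1" and ne: "(X,Y) \<noteq> (X',Y')"
    and B: "D*(X*X'-Y*Y') - (X*X'+Y*Y') + (D^2-1)/2 = 0"
  shows "((a*X)*(a*X')/a^2 + (b*Y)*(b*Y')/b^2 - 1)/dist (a*X', b*Y') (a*X, b*Y) = - sqrt (D/(a^2-b^2))"
proof -
  have a0: "a > 0" using b0 ba by simp
  have ab2: "a^2 - b^2 > 0" using b0 ba by (simp add: power_strict_mono)
  define k where "k = D/(a^2-b^2)"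
  have k0: "k > 0" unfolding k_def using D0 ab2 by simp
  define c where "c = X*X'+Y*Y'"
  define W where "W = (a^2+b^2)-(a^2-b^2)*(X*X'-Y*Y')"
  have lhs_num: "(a*X)*(a*X')/a^2 + (b*Y)*(b*Y')/b^2 - 1 = c - 1"
    unfolding c_def using a0 b0 by (simp add: field_simps power2_eq_square)
  have c1: "1 - c = ((X-X')^2+(Y-Y')^2)/2" unfolding c_def using u u' by algebra
  have c1p: "1 - c > 0" using c1 sum_sq_pos[OF ne] by simp
  have kW: "1 - c = k*W"
  proof -
    have "k*W = D*(a^2+b^2)/(a^2-b^2) - D*(X*X'-Y*Y')" unfolding k_def W_def using ab2
      by (simp add: field_simps)
    moreover have "D*(a^2+b^2)/(a^2-b^2) = 1 - (D^2-1)/2"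
    proof -
      have "D*(a^2+b^2) = (1 - (D^2-1)/2)*(a^2-b^2)" using Drel by algebra
      then show ?thesis using ab2 by (simp add: field_simps)
    qed
    ultimately show ?thesis using B unfolding c_def by linarith
  qed
  have dd0: "dist (a*X', b*Y') (a*X, b*Y) ^2 = (a*X'-a*X)^2+(b*Y'-b*Y)^2"
    unfolding dist_pt by simp
  have dd1: "(a*X'-a*X)^2+(b*Y'-b*Y)^2 = a^2*(X'-X)^2+b^2*(Y'-Y)^2" by algebra
  have dd2: "(1-(X'*X+Y'*Y))*((a^2+b^2)-(a^2-b^2)*(X'*X-Y'*Y)) = (1-c)*W"
    unfolding c_def W_def by algebra
  have dd: "dist (a*X', b*Y') (a*X, b*Y) ^2 = (1-c)*W"
    unfolding dd0 dd1 I1[OF u' u, of a b] dd2 ..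
  have W0: "W = (1-c)/k" using kW k0 by (simp add: field_simps)
  have "dist (a*X', b*Y') (a*X, b*Y) ^2 = ((1-c)/sqrt k)^2"
    unfolding dd W0 using k0 by (simp add: power2_eq_square power_divide)
  then have ds: "dist (a*X', b*Y') (a*X, b*Y) = (1-c)/sqrt k"
    using c1p k0 by (metis power2_eq_iff_nonneg zero_le_dist divide_nonneg_pos less_imp_le real_sqrt_gt_zero)
  show ?thesis unfolding lhs_num ds k_def[symmetric] using c1p k0
    by (simp add: field_simps)
qed

lemma unit_re_im: "u * cnj u = 1 \<Longrightarrow> (Re u)^2 + (Im u)^2 = 1"
  by (metis complex_mult_cnj of_real_eq_1_iff)

lemma core:
  fixes a b D :: real and u1 u2 u3 w :: complex
  assumes b0: "0 < b" and ba: "b < a" and DD: "D*(a^2-b^2) = 2*delta a b - a^2 - b^2"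
    and d12: "u1 \<noteq> u2" and d13: "u1 \<noteq> u3" and d23: "u2 \<noteq> u3"
    and n1: "u1 * cnj u1 = 1" and n2: "u2 * cnj u2 = 1" and n3: "u3 * cnj u3 = 1"
    and e1: "u1+u2+u3 = of_real D * w" and e2: "u1*u2+u1*u3+u2*u3 = - of_real D"
    and e3: "u1*u2*u3 = - w"
  shows "three_periodic a b (a*Re u1, b*Im u1) (a*Re u2, b*Im u2) (a*Re u3, b*Im u3)"
    and "tri_center h5 (a*Re u1, b*Im u1) (a*Re u2, b*Im u2) (a*Re u3, b*Im u3)
         = ((4*a^2*D + (a^2-b^2)*(1-D))/(8*a) * Re w, (4*b^2*D + (a^2-b^2)*(1+D))/(8*b) * Im w)"
proof -
  have a0: "a > 0" using b0 ba by simp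
  have ab2: "a^2 - b^2 > 0" using b0 ba by (simp add: power_strict_mono)
  note DF = Dfacts[OF b0 ba DD]
  define X1 where "X1 = Re u1" define Y1 where "Y1 = Im u1"
  define X2 where "X2 = Re u2" define Y2 where "Y2 = Im u2"
  define X3 where "X3 = Re u3" define Y3 where "Y3 = Im u3"
  define W1 where "W1 = Re w" define W2 where "W2 = Im w"
  have U1: "u1 = Complex X1 Y1" unfolding X1_def Y1_def by simp
  have U2: "u2 = Complex X2 Y2" unfolding X2_def Y2_def by simp
  have U3: "u3 = Complex X3 Y3" unfolding X3_def Y3_def by simp
  have UW: "w = Complex W1 W2" unfolding W1_def W2_def by simp
  have un1: "X1^2+Y1^2=1" unfolding X1_def Y1_def using unit_re_im[OF n1] .
  have un2: "X2^2+Y2^2=1" unfolding X2_def Y2_def using unit_re_im[OF n2] .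
  have un3: "X3^2+Y3^2=1" unfolding X3_def Y3_def using unit_re_im[OF n3] .
  have nw: "w * cnj w = 1"
  proof -
    have "w * cnj w = (u1*cnj u1)*(u2*cnj u2)*(u3*cnj u3)"
      using e3 by (metis (no_types) complex_cnj_minus complex_cnj_mult minus_mult_minus mult.assoc mult.left_commute)
    then show ?thesis using n1 n2 n3 by simp
  qed
  have unw: "W1^2+W2^2=1" unfolding W1_def W2_def using unit_re_im[OF nw] .
  define S where "S = (D^2-1)/2"
  have Sc: "2 * (of_real S :: complex) = of_real D^2 - 1" unfolding S_def by simp
  have F12: "of_real D*u1^2*u2^2 - u1^2 - u2^2 + 2 * of_real S*u1*u2 + of_real D = 0"
    by (rule coreF[OF e1 e2 e3 Sc])
  have F13: "of_real D*u1^2*u3^2 - u1^2 - u3^2 + 2 * of_real S*u1*u3 + of_real D = 0"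
    by (rule coreF[of u1 u3 u2]) (use e1 e2 e3 Sc in \<open>simp_all add: algebra_simps\<close>)
  have F23: "of_real D*u2^2*u3^2 - u2^2 - u3^2 + 2 * of_real S*u2*u3 + of_real D = 0"
    by (rule coreF[of u2 u3 u1]) (use e1 e2 e3 Sc in \<open>simp_all add: algebra_simps\<close>)
  have nz: "u1 \<noteq> 0" "u2 \<noteq> 0" "u3 \<noteq> 0" using n1 n2 n3 by auto
  have Bl: "\<And>X Y X' Y'. X^2+Y^2=1 \<Longrightarrow> X'^2+Y'^2=1 \<Longrightarrow> Complex X Y \<noteq> 0 \<Longrightarrow> Complex X' Y' \<noteq> 0 \<Longrightarrow>
     of_real D*(Complex X Y)^2*(Complex X' Y')^2 - (Complex X Y)^2 - (Complex X' Y')^2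
         + 2 * of_real S*(Complex X Y)*(Complex X' Y') + of_real D = 0 \<Longrightarrow>
     D*(X*X'-Y*Y') - (X*X'+Y*Y') + (D^2-1)/2 = 0"
  proof -
    fix X Y X' Y' :: real
    assume h: "X^2+Y^2=1" "X'^2+Y'^2=1" "Complex X Y \<noteq> 0" "Complex X' Y' \<noteq> 0"
      "of_real D*(Complex X Y)^2*(Complex X' Y')^2 - (Complex X Y)^2 - (Complex X' Y')^2
         + 2 * of_real S*(Complex X Y)*(Complex X' Y') + of_real D = 0"
    then have "2*(Complex X Y)*(Complex X' Y')* of_real (D*(X*X'-Y*Y') - (X*X'+Y*Y') + S) = 0"
      using F_real[OF h(1,2), of D S] by simp
    then have "complex_of_real (D*(X*X'-Y*Y') - (X*X'+Y*Y') + S) = 0" using h(3,4) by simp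
    then show "D*(X*X'-Y*Y') - (X*X'+Y*Y') + (D^2-1)/2 = 0" unfolding S_def by (simp only: of_real_eq_0_iff)
  qed
  have B12: "D*(X1*X2-Y1*Y2) - (X1*X2+Y1*Y2) + (D^2-1)/2 = 0"
    by (rule Bl[OF un1 un2]) (use nz F12 U1 U2 in auto)
  have B13: "D*(X1*X3-Y1*Y3) - (X1*X3+Y1*Y3) + (D^2-1)/2 = 0"
    by (rule Bl[OF un1 un3]) (use nz F13 U1 U3 in auto)
  have B23: "D*(X2*X3-Y2*Y3) - (X2*X3+Y2*Y3) + (D^2-1)/2 = 0"
    by (rule Bl[OF un2 un3]) (use nz F23 U2 U3 in auto)
  have sym: "\<And>X Y X' Y'. D*(X*X'-Y*Y') - (X*X'+Y*Y') + (D^2-1)/2 = 0 \<Longrightarrow>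
      D*(X'*X-Y'*Y) - (X'*X+Y'*Y) + (D^2-1)/2 = 0" by (simp add: algebra_simps)
  have ne12: "(X1,Y1) \<noteq> (X2,Y2)" using d12 U1 U2 by auto
  have ne13: "(X1,Y1) \<noteq> (X3,Y3)" using d13 U1 U3 by auto
  have ne23: "(X2,Y2) \<noteq> (X3,Y3)" using d23 U2 U3 by auto
  note PR = pair_ratio[OF b0 ba DF(1) DF(3)]
  have r12: "((a*X1)*(a*X2)/a^2 + (b*Y1)*(b*Y2)/b^2 - 1)/dist (a*X2, b*Y2) (a*X1, b*Y1) = - sqrt (D/(a^2-b^2))"
    by (rule PR[OF un1 un2 ne12 B12])
  have r13: "((a*X1)*(a*X3)/a^2 + (b*Y1)*(b*Y3)/b^2 - 1)/dist (a*X3, b*Y3) (a*X1, b*Y1) = - sqrt (D/(a^2-b^2))"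
    by (rule PR[OF un1 un3 ne13 B13])
  have r23: "((a*X2)*(a*X3)/a^2 + (b*Y2)*(b*Y3)/b^2 - 1)/dist (a*X3, b*Y3) (a*X2, b*Y2) = - sqrt (D/(a^2-b^2))"
    by (rule PR[OF un2 un3 ne23 B23])
  have r21: "((a*X2)*(a*X1)/a^2 + (b*Y2)*(b*Y1)/b^2 - 1)/dist (a*X1, b*Y1) (a*X2, b*Y2) = - sqrt (D/(a^2-b^2))"
    by (rule PR[OF un2 un1 ne12[symmetric] sym[OF B12]])
  have r31: "((a*X3)*(a*X1)/a^2 + (b*Y3)*(b*Y1)/b^2 - 1)/dist (a*X1, b*Y1) (a*X3, b*Y3) = - sqrt (D/(a^2-b^2))"
    by (rule PR[OF un3 un1 ne13[symmetric] sym[OF B13]])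
  have r32: "((a*X3)*(a*X2)/a^2 + (b*Y3)*(b*Y2)/b^2 - 1)/dist (a*X2, b*Y2) (a*X3, b*Y3) = - sqrt (D/(a^2-b^2))"
    by (rule PR[OF un3 un2 ne23[symmetric] sym[OF B23]])
  define dn where "dn = (X2-X1)*(Y3-Y1)-(Y2-Y1)*(X3-X1)"
  have dn0: "dn \<noteq> 0"
  proof
    assume "dn = 0"
    then have "((X2-X3)^2+(Y2-Y3)^2)*((X3-X1)^2+(Y3-Y1)^2)*((X1-X2)^2+(Y1-Y2)^2) = 0"
      using I8[OF un1 un2 un3] unfolding dn_def by simp
    moreover have "(X2-X3)^2+(Y2-Y3)^2 > 0" using sum_sq_pos[OF ne23] .
    moreover have "(X3-X1)^2+(Y3-Y1)^2 > 0" using sum_sq_pos[OF ne13[symmetric]] .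
    moreover have "(X1-X2)^2+(Y1-Y2)^2 > 0" using sum_sq_pos[OF ne12] .
    ultimately show False by (metis mult_pos_pos less_irrefl)
  qed
  have nd1: "(a*X2-a*X1)*(b*Y3-b*Y1)-(b*Y2-b*Y1)*(a*X3-a*X1) \<noteq> 0"
  proof -
    have "(a*X2-a*X1)*(b*Y3-b*Y1)-(b*Y2-b*Y1)*(a*X3-a*X1) = a*b*dn" unfolding dn_def by algebra
    then show ?thesis using dn0 a0 b0 by simp
  qed
  have nd2: "(a*X3-a*X2)*(b*Y1-b*Y2)-(b*Y3-b*Y2)*(a*X1-a*X2) \<noteq> 0"
  proof -
    have "(a*X3-a*X2)*(b*Y1-b*Y2)-(b*Y3-b*Y2)*(a*X1-a*X2) = a*b*dn" unfolding dn_def by algebra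
    then show ?thesis using dn0 a0 b0 by simp
  qed
  have nd3: "(a*X1-a*X3)*(b*Y2-b*Y3)-(b*Y1-b*Y3)*(a*X2-a*X3) \<noteq> 0"
  proof -
    have "(a*X1-a*X3)*(b*Y2-b*Y3)-(b*Y1-b*Y3)*(a*X2-a*X3) = a*b*dn" unfolding dn_def by algebra
    then show ?thesis using dn0 a0 b0 by simp
  qed
  have E: "\<And>X Y. X^2+Y^2=1 \<Longrightarrow> (a*X)^2/a^2 + (b*Y)^2/b^2 = 1"
    using a0 b0 by (simp add: power_mult_distrib)
  have E1: "(a*X1)^2/a^2 + (b*Y1)^2/b^2 = 1" using E[OF un1] .
  have E2: "(a*X2)^2/a^2 + (b*Y2)^2/b^2 = 1" using E[OF un2] .
  have E3: "(a*X3)^2/a^2 + (b*Y3)^2/b^2 = 1" using E[OF un3] .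
  have a0': "a \<noteq> 0" "b \<noteq> 0" using a0 b0 by auto
  have nb1: "normal_bisects a b (a*X1, b*Y1) (a*X2, b*Y2) (a*X3, b*Y3)"
    using nb_iff[OF a0' E1 nd1] r12 r13 by simp
  have nb2: "normal_bisects a b (a*X2, b*Y2) (a*X3, b*Y3) (a*X1, b*Y1)"
    using nb_iff[OF a0' E2 nd2] r23 r21 by simp
  have nb3: "normal_bisects a b (a*X3, b*Y3) (a*X1, b*Y1) (a*X2, b*Y2)"
    using nb_iff[OF a0' E3 nd3] r31 r32 by simp
  show "three_periodic a b (a*Re u1, b*Im u1) (a*Re u2, b*Im u2) (a*Re u3, b*Im u3)"
    unfolding three_periodic_def nondegenerate_def on_ellipse_def
      X1_def[symmetric] Y1_def[symmetric] X2_def[symmetric] Y2_def[symmetric]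
      X3_def[symmetric] Y3_def[symmetric]
    using nd1 E1 E2 E3 nb1 nb2 nb3 by simp
  have cub: "\<And>u. u = u1 \<or> u = u2 \<or> u = u3 \<Longrightarrow> u^3 - of_real D*w*u^2 - of_real D*u + w = 0"
  proof -
    fix u assume "u = u1 \<or> u = u2 \<or> u = u3"
    then show "u^3 - of_real D*w*u^2 - of_real D*u + w = 0"
    proof (elim disjE)
      assume "u = u1" then show ?thesis using coref[OF e1 e2 e3] by simp
    next
      assume "u = u2" then show ?thesis using coref[of u2 u1 u3 "of_real D" w] e1 e2 e3
        by (simp add: algebra_simps)
    next
      assume "u = u3" then show ?thesis using coref[of u3 u1 u2 "of_real D" w] e1 e2 e3
        by (simp add: algebra_simps)
    qed
  qed
  have J1: "2*X1^2+(1-D)*W1*X1+(1+D)*W2*Y1 = 1+D"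
    by (rule I5[OF un1 unw]) (use cub[of u1] U1 UW in simp)
  have J2: "2*X2^2+(1-D)*W1*X2+(1+D)*W2*Y2 = 1+D"
    by (rule I5[OF un2 unw]) (use cub[of u2] U2 UW in simp)
  have J3: "2*X3^2+(1-D)*W1*X3+(1+D)*W2*Y3 = 1+D"
    by (rule I5[OF un3 unw]) (use cub[of u3] U3 UW in simp)
  define A where "A = -(a^2-b^2)*(1-D)/(4*a)"
  define B where "B = -(a^2-b^2)*(1+D)/(4*b)"
  have OD: "\<And>X Y. X^2+Y^2=1 \<Longrightarrow> 2*X^2+(1-D)*W1*X+(1+D)*W2*Y = 1+D \<Longrightarrow>
     (a*X-A*W1)^2+(b*Y-B*W2)^2 = b^2 + (a^2-b^2)*(1+D)/2 + (A*W1)^2 + (B*W2)^2"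
  proof -
    fix X Y :: real assume h: "X^2+Y^2=1" "2*X^2+(1-D)*W1*X+(1+D)*W2*Y = 1+D"
    have aA: "2*a*A = -(a^2-b^2)*(1-D)/2" unfolding A_def using a0 by (simp add: field_simps)
    have bB: "2*b*B = -(a^2-b^2)*(1+D)/2" unfolding B_def using b0 by (simp add: field_simps)
    have "(a*X-A*W1)^2+(b*Y-B*W2)^2 = b^2*(X^2+Y^2) + (a^2-b^2)*X^2 - (2*a*A)*W1*X - (2*b*B)*W2*Y
        + (A*W1)^2 + (B*W2)^2" by algebra
    also have "\<dots> = b^2 + (a^2-b^2)/2*(2*X^2+(1-D)*W1*X+(1+D)*W2*Y) + (A*W1)^2 + (B*W2)^2"
      unfolding aA bB h(1) by (simp add: field_simps power2_eq_square)
    finally show "(a*X-A*W1)^2+(b*Y-B*W2)^2 = b^2 + (a^2-b^2)*(1+D)/2 + (A*W1)^2 + (B*W2)^2"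
      unfolding h(2) by simp
  qed
  have o1: "(a*X1-A*W1)^2+(b*Y1-B*W2)^2 = (a*X2-A*W1)^2+(b*Y2-B*W2)^2"
    using OD[OF un1 J1] OD[OF un2 J2] by simp
  have o2: "(a*X1-A*W1)^2+(b*Y1-B*W2)^2 = (a*X3-A*W1)^2+(b*Y3-B*W2)^2"
    using OD[OF un1 J1] OD[OF un3 J3] by simp
  have TC: "tri_center h5 (a*X1, b*Y1) (a*X2, b*Y2) (a*X3, b*Y3) =
     ((a*X1+a*X2+a*X3-A*W1)/2, (b*Y1+b*Y2+b*Y3-B*W2)/2)"
    by (rule tri_center_h5[OF nd1 o1 o2])
  have sx: "X1+X2+X3 = D*W1" using arg_cong[OF e1, of Re] unfolding X1_def X2_def X3_def W1_def by simp
  have sy: "Y1+Y2+Y3 = D*W2" using arg_cong[OF e1, of Im] unfolding Y1_def Y2_def Y3_def W2_def by simp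
  have fx: "(a*X1+a*X2+a*X3-A*W1)/2 = (4*a^2*D + (a^2-b^2)*(1-D))/(8*a) * W1"
  proof -
    have "a*X1+a*X2+a*X3 = a*(D*W1)" unfolding sx[symmetric] by algebra
    then show ?thesis unfolding A_def using a0 by (simp add: field_simps power2_eq_square)
  qed
  have fy: "(b*Y1+b*Y2+b*Y3-B*W2)/2 = (4*b^2*D + (a^2-b^2)*(1+D))/(8*b) * W2"
  proof -
    have "b*Y1+b*Y2+b*Y3 = b*(D*W2)" unfolding sy[symmetric] by algebra
    then show ?thesis unfolding B_def using b0 by (simp add: field_simps power2_eq_square)
  qed
  show "tri_center h5 (a*Re u1, b*Im u1) (a*Re u2, b*Im u2) (a*Re u3, b*Im u3)
         = ((4*a^2*D + (a^2-b^2)*(1-D))/(8*a) * Re w, (4*b^2*D + (a^2-b^2)*(1+D))/(8*b) * Im w)"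
    using TC fx fy unfolding X1_def Y1_def X2_def Y2_def X3_def Y3_def W1_def W2_def by simp
qed



lemma cis_sum: "cis A + cis B = 2 * complex_of_real (cos ((A-B)/2)) * cis ((A+B)/2)"
proof -
  have "2 * complex_of_real (cos ((A-B)/2)) = cis ((A-B)/2) + cis (-((A-B)/2))"
    by (simp add: complex_eq_iff)
  then have "2 * complex_of_real (cos ((A-B)/2)) * cis ((A+B)/2)
      = cis ((A-B)/2) * cis ((A+B)/2) + cis (-((A-B)/2)) * cis ((A+B)/2)"
    by (simp add: algebra_simps)
  also have "\<dots> = cis A + cis B" by (simp add: cis_mult field_simps)
  finally show ?thesis by simp
qed

lemma key_root:
  fixes D th ph :: real
  assumes "cos ((3*th-ph)/2) - D * cos ((th+ph)/2) = 0"
  shows "(cis th)^3 - of_real D * cis ph * (cis th)^2 - of_real D * cis th + cis ph = 0"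
proof -
  have "(cis th)^3 - of_real D * cis ph * (cis th)^2 - of_real D * cis th + cis ph
      = (cis (3*th) + cis ph) - of_real D * (cis (ph + 2*th) + cis th)"
  proof -
    have c3: "(cis th)^3 = cis (3*th)" using Complex.DeMoivre[of th 3] by simp
    have c2: "(cis th)^2 = cis (2*th)" using Complex.DeMoivre[of th 2] by simp
    show ?thesis unfolding c3 c2 by (simp add: cis_mult algebra_simps)
  qed
  also have "\<dots> = 2 * cis ((3*th+ph)/2) * of_real (cos ((3*th-ph)/2) - D * cos ((th+ph)/2))"
    unfolding cis_sum by (simp add: algebra_simps add_divide_distrib diff_divide_distrib)
  also have "\<dots> = 0" using assms by simp
  finally show ?thesis .
qed

lemma cis_neq:
  assumes "x < y" "y < x + 2*pi"
  shows "cis x \<noteq> cis y"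
proof
  assume h: "cis x = cis y"
  have "cis (y - x) = cis y / cis x" by (simp add: cis_divide)
  then have "cis (y - x) = 1" using h by simp
  then have "cos (y - x) = 1" by (metis cis.sel(1) one_complex.sel(1))
  then obtain n :: int where n: "y - x = real_of_int n * 2 * pi" unfolding cos_one_2pi_int by blast
  have "0 < real_of_int n * 2 * pi" using n assms by linarith
  then have "n > 0" by (simp add: zero_less_mult_iff)
  moreover have "real_of_int n * 2 * pi < 1 * 2 * pi" using n assms by linarith
  then have "n < 1" by simp
  ultimately show False by simp
qed

lemma roots:
  fixes D :: real and w :: complex
  assumes D0: "0 < D" and D1: "D < 1" and nw: "w * cnj w = 1"
  shows "\<exists>u1 u2 u3. u1 \<noteq> u2 \<and> u1 \<noteq> u3 \<and> u2 \<noteq> u3 \<and>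
     u1 * cnj u1 = 1 \<and> u2 * cnj u2 = 1 \<and> u3 * cnj u3 = 1 \<and>
     u1^3 - of_real D * w * u1^2 - of_real D * u1 + w = 0 \<and>
     u2^3 - of_real D * w * u2^2 - of_real D * u2 + w = 0 \<and>
     u3^3 - of_real D * w * u3^2 - of_real D * u3 + w = 0"
proof -
  have "complex_of_real ((norm w)^2) = 1" using nw complex_norm_square by metis
  then have "(norm w)^2 = 1" by (metis of_real_eq_1_iff)
  then have nw1: "norm w = 1" by (smt (verit) norm_ge_zero power2_eq_1_iff)
  then have w0: "w \<noteq> 0" by auto
  define ph where "ph = Arg w"
  have wc: "cis ph = w" unfolding ph_def using cis_Arg[OF w0] nw1 by (simp add: sgn_div_norm)
  define h where "h = (\<lambda>th. cos ((3*th-ph)/2) - D * cos ((th+ph)/2))"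
  have hc: "\<forall>x. isCont h x" unfolding h_def by (auto intro!: continuous_intros)
  define t0 where "t0 = ph/3"
  define t1 where "t1 = ph/3 + 2*pi/3"
  define t2 where "t2 = ph/3 + 4*pi/3"
  define t3 where "t3 = ph/3 + 2*pi"
  have bnd: "\<And>x. \<bar>D * cos x\<bar> < 1"
  proof -
    fix x
    have "\<bar>D * cos x\<bar> = D * \<bar>cos x\<bar>" using D0 by (simp add: abs_mult)
    also have "\<dots> \<le> D" using D0 by (simp add: mult_left_le)
    finally show "\<bar>D * cos x\<bar> < 1" using D1 by simp
  qed
  have h0: "h t0 > 0"
  proof -
    have "(3*t0-ph)/2 = 0" unfolding t0_def by simp
    then show ?thesis unfolding h_def using bnd[of "(t0+ph)/2"] by simp
  qed
  have h1: "h t1 < 0"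
  proof -
    have "(3*t1-ph)/2 = pi" unfolding t1_def by (simp add: field_simps)
    then show ?thesis unfolding h_def using bnd[of "(t1+ph)/2"] by simp
  qed
  have h2: "h t2 > 0"
  proof -
    have "(3*t2-ph)/2 = 2*pi" unfolding t2_def by (simp add: field_simps)
    then show ?thesis unfolding h_def using bnd[of "(t2+ph)/2"] by simp
  qed
  have h3: "h t3 < 0"
  proof -
    have "(3*t3-ph)/2 = 3*pi" unfolding t3_def by (simp add: field_simps)
    then show ?thesis unfolding h_def using bnd[of "(t3+ph)/2"] by simp
  qed
  have o01: "t0 \<le> t1" "t1 \<le> t2" "t2 \<le> t3" unfolding t0_def t1_def t2_def t3_def by simp_all
  obtain ta where ta: "t0 \<le> ta" "ta \<le> t1" "h ta = 0"
    using IVT2[of h t1 0 t0] h0 h1 o01 hc by force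
  obtain tb where tb: "t1 \<le> tb" "tb \<le> t2" "h tb = 0"
    using IVT[of h t1 0 t2] h1 h2 o01 hc by force
  obtain tc where tc: "t2 \<le> tc" "tc \<le> t3" "h tc = 0"
    using IVT2[of h t3 0 t2] h2 h3 o01 hc by force
  have "ta \<noteq> t0" "ta \<noteq> t1" "tb \<noteq> t1" "tb \<noteq> t2" "tc \<noteq> t3" using ta tb tc h0 h1 h2 h3 by auto
  then have lt: "t0 < ta" "ta < tb" "tb < tc" "tc < t3" using ta tb tc by auto
  have t3e: "t3 = t0 + 2*pi" unfolding t3_def t0_def by simp
  have n12: "cis ta \<noteq> cis tb" by (rule cis_neq) (use lt t3e in auto)
  have n13: "cis ta \<noteq> cis tc" by (rule cis_neq) (use lt t3e in auto)
  have n23: "cis tb \<noteq> cis tc" by (rule cis_neq) (use lt t3e in auto)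
  have un: "\<And>t. cis t * cnj (cis t) = 1" by (simp add: cis_cnj cis_mult)
  have r: "\<And>t. h t = 0 \<Longrightarrow> (cis t)^3 - of_real D * w * (cis t)^2 - of_real D * cis t + w = 0"
    using key_root wc unfolding h_def by metis
  show ?thesis
    by (rule exI[of _ "cis ta"], rule exI[of _ "cis tb"], rule exI[of _ "cis tc"])
       (use n12 n13 n23 un r ta tb tc in auto)
qed



lemma pair_conv:
  fixes a b J X Y X' Y' :: real
  assumes a0: "0 < a" and b0: "0 < b"
    and u: "X^2+Y^2=1" and u': "X'^2+Y'^2=1" and ne: "(X,Y) \<noteq> (X',Y')"
    and J: "((a*X)*(a*X')/a^2 + (b*Y)*(b*Y')/b^2 - 1)/dist (a*X', b*Y') (a*X, b*Y) = J"
  shows "J \<noteq> 0" "J^2*(a^2-b^2)*(X*X'-Y*Y') - (X*X'+Y*Y') + (1 - J^2*(a^2+b^2)) = 0"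
proof -
  define c where "c = X*X'+Y*Y'"
  define W where "W = (a^2+b^2)-(a^2-b^2)*(X*X'-Y*Y')"
  define d where "d = dist (a*X', b*Y') (a*X, b*Y)"
  have lhs_num: "(a*X)*(a*X')/a^2 + (b*Y)*(b*Y')/b^2 - 1 = c - 1"
    unfolding c_def using a0 b0 by (simp add: field_simps power2_eq_square)
  have c1: "1 - c = ((X-X')^2+(Y-Y')^2)/2" unfolding c_def using u u' by algebra
  have c1p: "1 - c > 0" using c1 sum_sq_pos[OF ne] by simp
  have dd0: "d ^2 = (a*X'-a*X)^2+(b*Y'-b*Y)^2" unfolding d_def dist_pt by simp
  have dd1: "(a*X'-a*X)^2+(b*Y'-b*Y)^2 = a^2*(X'-X)^2+b^2*(Y'-Y)^2" by algebra
  have dd2: "(1-(X'*X+Y'*Y))*((a^2+b^2)-(a^2-b^2)*(X'*X-Y'*Y)) = (1-c)*W"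
    unfolding c_def W_def by algebra
  have dd: "d^2 = (1-c)*W" unfolding dd0 dd1 I1[OF u' u, of a b] dd2 ..
  have dpos: "d > 0"
  proof -
    have "(a*X', b*Y') \<noteq> (a*X, b*Y)" using ne a0 b0 by auto
    then show ?thesis unfolding d_def by simp
  qed
  have Jd: "c - 1 = J * d" using J dpos unfolding lhs_num d_def[symmetric] by (simp add: field_simps)
  show "J \<noteq> 0" using Jd c1p by auto
  have "(1-c)^2 = J^2 * d^2" using Jd by (simp add: power2_eq_square algebra_simps)
  then have "(1-c)*(1-c) = (1-c)*(J^2*W)" unfolding dd by (simp add: power2_eq_square algebra_simps)
  then have "1 - c = J^2*W" using c1p by simp
  then show "J^2*(a^2-b^2)*(X*X'-Y*Y') - (X*X'+Y*Y') + (1 - J^2*(a^2+b^2)) = 0"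
    unfolding c_def W_def by (simp add: algebra_simps)
qed

lemma per_data:
  fixes a b X1 Y1 X2 Y2 X3 Y3 :: real
  assumes b0: "0 < b" and ba: "b < a"
    and TP: "three_periodic a b (a*X1, b*Y1) (a*X2, b*Y2) (a*X3, b*Y3)"
  shows "\<exists>D. D*(a^2-b^2) = 2*delta a b - a^2 - b^2 \<and>
     Complex X1 Y1 \<noteq> Complex X2 Y2 \<and> Complex X1 Y1 \<noteq> Complex X3 Y3 \<and> Complex X2 Y2 \<noteq> Complex X3 Y3 \<and>
     Complex X1 Y1 * cnj (Complex X1 Y1) = 1 \<and> Complex X2 Y2 * cnj (Complex X2 Y2) = 1 \<and>
     Complex X3 Y3 * cnj (Complex X3 Y3) = 1 \<and>
     Complex X1 Y1 + Complex X2 Y2 + Complex X3 Y3 = of_real D * (- (Complex X1 Y1 * Complex X2 Y2 * Complex X3 Y3)) \<and>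
     Complex X1 Y1 * Complex X2 Y2 + Complex X1 Y1 * Complex X3 Y3 + Complex X2 Y2 * Complex X3 Y3 = - of_real D"
proof -
  have a0: "a > 0" using b0 ba by simp
  have ab2: "a^2 - b^2 > 0" using b0 ba by (simp add: power_strict_mono)
  have a0': "a \<noteq> 0" "b \<noteq> 0" using a0 b0 by auto
  from TP have nd: "(a*X2-a*X1)*(b*Y3-b*Y1)-(b*Y2-b*Y1)*(a*X3-a*X1) \<noteq> 0"
    and E1: "(a*X1)^2/a^2 + (b*Y1)^2/b^2 = 1" and E2: "(a*X2)^2/a^2 + (b*Y2)^2/b^2 = 1"
    and E3: "(a*X3)^2/a^2 + (b*Y3)^2/b^2 = 1"
    and nb1: "normal_bisects a b (a*X1, b*Y1) (a*X2, b*Y2) (a*X3, b*Y3)"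
    and nb2: "normal_bisects a b (a*X2, b*Y2) (a*X3, b*Y3) (a*X1, b*Y1)"
    and nb3: "normal_bisects a b (a*X3, b*Y3) (a*X1, b*Y1) (a*X2, b*Y2)"
    unfolding three_periodic_def nondegenerate_def on_ellipse_def by simp_all
  define dn where "dn = (X2-X1)*(Y3-Y1)-(Y2-Y1)*(X3-X1)"
  have ndn: "(a*X2-a*X1)*(b*Y3-b*Y1)-(b*Y2-b*Y1)*(a*X3-a*X1) = a*b*dn" unfolding dn_def by algebra
  have nd2: "(a*X3-a*X2)*(b*Y1-b*Y2)-(b*Y3-b*Y2)*(a*X1-a*X2) \<noteq> 0"
  proof -
    have "(a*X3-a*X2)*(b*Y1-b*Y2)-(b*Y3-b*Y2)*(a*X1-a*X2) = a*b*dn" unfolding dn_def by algebra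
    then show ?thesis using nd ndn by simp
  qed
  have nd3: "(a*X1-a*X3)*(b*Y2-b*Y3)-(b*Y1-b*Y3)*(a*X2-a*X3) \<noteq> 0"
  proof -
    have "(a*X1-a*X3)*(b*Y2-b*Y3)-(b*Y1-b*Y3)*(a*X2-a*X3) = a*b*dn" unfolding dn_def by algebra
    then show ?thesis using nd ndn by simp
  qed
  have un: "\<And>X Y. (a*X)^2/a^2 + (b*Y)^2/b^2 = 1 \<Longrightarrow> X^2+Y^2=1"
    using a0 b0 by (simp add: power_mult_distrib)
  have un1: "X1^2+Y1^2=1" using un[OF E1] .
  have un2: "X2^2+Y2^2=1" using un[OF E2] .
  have un3: "X3^2+Y3^2=1" using un[OF E3] .
  have ne12: "(X1,Y1) \<noteq> (X2,Y2)" using nd by auto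
  have ne13: "(X1,Y1) \<noteq> (X3,Y3)" using nd by auto
  have ne23: "(X2,Y2) \<noteq> (X3,Y3)" using nd by (auto simp: algebra_simps)
  define g where "g = (\<lambda>X Y X' Y'. ((a*X)*(a*X')/a^2 + (b*Y)*(b*Y')/b^2 - 1)/dist (a*X', b*Y') (a*X, b*Y))"
  have gs: "\<And>X Y X' Y'. g X Y X' Y' = g X' Y' X Y" unfolding g_def by (simp add: dist_commute algebra_simps)
  have q1: "g X1 Y1 X2 Y2 = g X1 Y1 X3 Y3" using nb_iff[OF a0' E1 nd] nb1
    unfolding g_def by simp
  have q2: "g X2 Y2 X3 Y3 = g X2 Y2 X1 Y1" using nb_iff[OF a0' E2 nd2] nb2
    unfolding g_def by simp
  define J where "J = g X1 Y1 X2 Y2"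
  have J12: "g X1 Y1 X2 Y2 = J" unfolding J_def ..
  have J13: "g X1 Y1 X3 Y3 = J" using q1 J12 by simp
  have J23: "g X2 Y2 X3 Y3 = J" using q2 J12 gs by metis
  note PC12 = pair_conv[OF a0 b0 un1 un2 ne12 J12[unfolded g_def]]
  note PC13 = pair_conv[OF a0 b0 un1 un3 ne13 J13[unfolded g_def]]
  note PC23 = pair_conv[OF a0 b0 un2 un3 ne23 J23[unfolded g_def]]
  define D where "D = J^2*(a^2-b^2)"
  define S where "S = 1 - J^2*(a^2+b^2)"
  have D0: "D \<noteq> 0" unfolding D_def using PC12(1) ab2 by simp
  define u1 where "u1 = Complex X1 Y1"
  define u2 where "u2 = Complex X2 Y2"
  define u3 where "u3 = Complex X3 Y3"
  have Fz: "\<And>X Y X' Y'. X^2+Y^2=1 \<Longrightarrow> X'^2+Y'^2=1 \<Longrightarrow>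
      J^2*(a^2-b^2)*(X*X'-Y*Y') - (X*X'+Y*Y') + (1 - J^2*(a^2+b^2)) = 0 \<Longrightarrow>
      of_real D*(Complex X Y)^2*(Complex X' Y')^2 - (Complex X Y)^2 - (Complex X' Y')^2
         + 2 * of_real S*(Complex X Y)*(Complex X' Y') + of_real D = 0"
  proof -
    fix X Y X' Y' :: real assume h: "X^2+Y^2=1" "X'^2+Y'^2=1"
      "J^2*(a^2-b^2)*(X*X'-Y*Y') - (X*X'+Y*Y') + (1 - J^2*(a^2+b^2)) = 0"
    have "D*(X*X'-Y*Y') - (X*X'+Y*Y') + S = 0" using h(3) unfolding D_def S_def .
    then show "of_real D*(Complex X Y)^2*(Complex X' Y')^2 - (Complex X Y)^2 - (Complex X' Y')^2
         + 2 * of_real S*(Complex X Y)*(Complex X' Y') + of_real D = 0"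
      using F_real[OF h(1,2), of D S] by simp
  qed
  have d12: "u1 \<noteq> u2" "u1 \<noteq> u3" "u2 \<noteq> u3" unfolding u1_def u2_def u3_def using ne12 ne13 ne23 by auto
  have n: "u1 * cnj u1 = 1" "u2 * cnj u2 = 1" "u3 * cnj u3 = 1"
    unfolding u1_def u2_def u3_def using un1 un2 un3 by (simp_all add: complex_mult_cnj)
  note PCR = per_core[OF d12 n D0 Fz[OF un1 un2 PC12(2), folded u1_def u2_def]
      Fz[OF un1 un3 PC13(2), folded u1_def u3_def] Fz[OF un2 un3 PC23(2), folded u2_def u3_def]]
  have k: "1 + 2*(1 - J^2*(a^2+b^2)) = (J^2*(a^2-b^2))^2" using PCR(1) unfolding S_def D_def .
  have "(J^2*(a^2-b^2)^2 + a^2 + b^2)^2 = (2*delta a b)^2"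
  proof -
    have "(J^2*(a^2-b^2)^2 + a^2 + b^2)^2 = (a^2-b^2)^2*(J^2*(a^2-b^2))^2 + 2*J^2*(a^2-b^2)^2*(a^2+b^2) + (a^2+b^2)^2"
      by algebra
    also have "\<dots> = (a^2-b^2)^2*(1 + 2*(1 - J^2*(a^2+b^2))) + 2*J^2*(a^2-b^2)^2*(a^2+b^2) + (a^2+b^2)^2"
      unfolding k ..
    also have "\<dots> = 4*(a^4 - a^2*b^2 + b^4)" by algebra
    finally show ?thesis using delta_sq(1)[of a b] by (simp add: power_mult_distrib)
  qed
  then have "J^2*(a^2-b^2)^2 + a^2 + b^2 = 2*delta a b"
    using delta_sq(2)[of a b] by (subst (asm) power2_eq_iff_nonneg) (auto intro!: add_nonneg_nonneg)
  then have DD: "D*(a^2-b^2) = 2*delta a b - a^2 - b^2" unfolding D_def by (simp add: power2_eq_square algebra_simps)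
  show ?thesis
    apply (rule exI[of _ D])
    using DD d12 n PCR(2,3) unfolding u1_def u2_def u3_def by simp
qed

lemma a5_eq:
  fixes a b D :: real
  assumes b0: "0 < b" and ba: "b < a" and DD: "D*(a^2-b^2) = 2*delta a b - a^2 - b^2"
  shows "(- w5' a b + w5'' a b * delta a b) / w5 a b = (4*a^2*D + (a^2-b^2)*(1-D))/(8*a)"
    and "(w5' b a - w5'' b a * delta a b) / w5 b a = (4*b^2*D + (a^2-b^2)*(1+D))/(8*b)"
proof -
  have a0: "a > 0" using b0 ba by simp
  have ab2: "a^2 - b^2 > 0" using b0 ba by (simp add: power_strict_mono)
  define K where "K = 8*a*(a^2-b^2)"
  have K0: "K \<noteq> 0" unfolding K_def using a0 ab2 by simp
  have L1: "K * ((- w5' a b + w5'' a b * delta a b) / w5 a b) = 2*((3*a^2+b^2)*delta a b - a^2*(a^2+3*b^2))"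
    unfolding K_def w5_def w5'_def w5''_def using a0 ab2 by (simp add: field_simps)
  have R1: "K * ((4*a^2*D + (a^2-b^2)*(1-D))/(8*a)) = 4*a^2*(D*(a^2-b^2)) + (a^2-b^2)^2 - (a^2-b^2)*(D*(a^2-b^2))"
    unfolding K_def using a0 by (simp add: field_simps power2_eq_square)
  have R1': "4*a^2*(D*(a^2-b^2)) + (a^2-b^2)^2 - (a^2-b^2)*(D*(a^2-b^2)) = 2*((3*a^2+b^2)*delta a b - a^2*(a^2+3*b^2))"
    unfolding DD by algebra
  show "(- w5' a b + w5'' a b * delta a b) / w5 a b = (4*a^2*D + (a^2-b^2)*(1-D))/(8*a)"
    using L1 R1 R1' K0 by (metis mult_left_cancel)
  define K' where "K' = 8*b*(a^2-b^2)"
  have K'0: "K' \<noteq> 0" unfolding K'_def using b0 ab2 by simp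
  have L2: "K' * ((w5' b a - w5'' b a * delta a b) / w5 b a) = 2*((3*b^2+a^2)*delta a b - b^2*(b^2+3*a^2))"
  proof -
    have w2: "w5 b a = -(4*b*(a^2-b^2))" unfolding w5_def by (simp add: algebra_simps)
    show ?thesis unfolding K'_def w5'_def w5''_def w2 using b0 ab2 by (simp add: field_simps)
  qed
  have R2: "K' * ((4*b^2*D + (a^2-b^2)*(1+D))/(8*b)) = 4*b^2*(D*(a^2-b^2)) + (a^2-b^2)^2 + (a^2-b^2)*(D*(a^2-b^2))"
    unfolding K'_def using b0 by (simp add: field_simps power2_eq_square)
  have R2': "4*b^2*(D*(a^2-b^2)) + (a^2-b^2)^2 + (a^2-b^2)*(D*(a^2-b^2)) = 2*((3*b^2+a^2)*delta a b - b^2*(b^2+3*a^2))"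
    unfolding DD by algebra
  show "(w5' b a - w5'' b a * delta a b) / w5 b a = (4*b^2*D + (a^2-b^2)*(1+D))/(8*b)"
    using L2 R2 R2' K'0 by (metis mult_left_cancel)
qed




theorem theorem1:
  fixes a b :: real
  assumes "0 < b" and "b < a"
  shows "locus h5 a b =
    (let a5 = (- w5' a b + w5'' a b * delta a b) / w5 a b;
         b5 = (w5' b a - w5'' b a * delta a b) / w5 b a
     in {P. (fst P)^2 / a5^2 + (snd P)^2 / b5^2 = 1})"
proof -
  note b0 = assms(1) and ba = assms(2)
  have a0: "a > 0" using b0 ba by simp
  have ab2: "a^2 - b^2 > 0" using b0 ba by (simp add: power_strict_mono)
  define D where "D = (2*delta a b - a^2 - b^2)/(a^2-b^2)"
  have DD: "D*(a^2-b^2) = 2*delta a b - a^2 - b^2" unfolding D_def using ab2 by simp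
  note DF = Dfacts[OF b0 ba DD]
  define A5 where "A5 = (4*a^2*D + (a^2-b^2)*(1-D))/(8*a)"
  define B5 where "B5 = (4*b^2*D + (a^2-b^2)*(1+D))/(8*b)"
  have A5p: "A5 > 0" unfolding A5_def using a0 ab2 DF by (intro divide_pos_pos add_pos_nonneg) auto
  have B5p: "B5 > 0" unfolding B5_def using b0 ab2 DF by (intro divide_pos_pos add_pos_pos) auto
  have AE: "(- w5' a b + w5'' a b * delta a b) / w5 a b = A5" unfolding A5_def by (rule a5_eq(1)[OF b0 ba DD])
  have BE: "(w5' b a - w5'' b a * delta a b) / w5 b a = B5" unfolding B5_def by (rule a5_eq(2)[OF b0 ba DD])
  have "locus h5 a b = {P. (fst P)^2 / A5^2 + (snd P)^2 / B5^2 = 1}"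
  proof (rule set_eqI, rule iffI)
    fix Q assume "Q \<in> locus h5 a b"
    then obtain P1 P2 P3 where Q: "Q = tri_center h5 P1 P2 P3" and TP: "three_periodic a b P1 P2 P3"
      unfolding locus_def by blast
    define X1 where "X1 = fst P1 / a" define Y1 where "Y1 = snd P1 / b"
    define X2 where "X2 = fst P2 / a" define Y2 where "Y2 = snd P2 / b"
    define X3 where "X3 = fst P3 / a" define Y3 where "Y3 = snd P3 / b"
    have P1: "P1 = (a*X1, b*Y1)" unfolding X1_def Y1_def using a0 b0 by (simp add: prod_eq_iff)
    have P2: "P2 = (a*X2, b*Y2)" unfolding X2_def Y2_def using a0 b0 by (simp add: prod_eq_iff)
    have P3: "P3 = (a*X3, b*Y3)" unfolding X3_def Y3_def using a0 b0 by (simp add: prod_eq_iff)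
    obtain D' where H: "D'*(a^2-b^2) = 2*delta a b - a^2 - b^2 \<and>
     Complex X1 Y1 \<noteq> Complex X2 Y2 \<and> Complex X1 Y1 \<noteq> Complex X3 Y3 \<and> Complex X2 Y2 \<noteq> Complex X3 Y3 \<and>
     Complex X1 Y1 * cnj (Complex X1 Y1) = 1 \<and> Complex X2 Y2 * cnj (Complex X2 Y2) = 1 \<and>
     Complex X3 Y3 * cnj (Complex X3 Y3) = 1 \<and>
     Complex X1 Y1 + Complex X2 Y2 + Complex X3 Y3 = of_real D' * (- (Complex X1 Y1 * Complex X2 Y2 * Complex X3 Y3)) \<and>
     Complex X1 Y1 * Complex X2 Y2 + Complex X1 Y1 * Complex X3 Y3 + Complex X2 Y2 * Complex X3 Y3 = - of_real D'"
      using per_data[OF b0 ba TP[unfolded P1 P2 P3]] by blast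
    have "D' = D" using H DD ab2 by (metis less_irrefl mult_right_cancel)
    then have H': "Complex X1 Y1 \<noteq> Complex X2 Y2" "Complex X1 Y1 \<noteq> Complex X3 Y3" "Complex X2 Y2 \<noteq> Complex X3 Y3"
     "Complex X1 Y1 * cnj (Complex X1 Y1) = 1" "Complex X2 Y2 * cnj (Complex X2 Y2) = 1"
     "Complex X3 Y3 * cnj (Complex X3 Y3) = 1"
     "Complex X1 Y1 + Complex X2 Y2 + Complex X3 Y3 = of_real D * (- (Complex X1 Y1 * Complex X2 Y2 * Complex X3 Y3))"
     "Complex X1 Y1 * Complex X2 Y2 + Complex X1 Y1 * Complex X3 Y3 + Complex X2 Y2 * Complex X3 Y3 = - of_real D"
      using H by auto
    define w where "w = - (Complex X1 Y1 * Complex X2 Y2 * Complex X3 Y3)"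
    have e3: "Complex X1 Y1 * Complex X2 Y2 * Complex X3 Y3 = - w" unfolding w_def by simp
    note C = core[OF b0 ba DD H'(1-6) H'(7)[folded w_def] H'(8) e3]
    have TC: "Q = (A5 * Re w, B5 * Im w)" using C(2) unfolding Q P1 P2 P3 A5_def B5_def by simp
    have nw: "w * cnj w = 1"
    proof -
      have "w * cnj w = (Complex X1 Y1 * cnj (Complex X1 Y1))*(Complex X2 Y2 * cnj (Complex X2 Y2))*(Complex X3 Y3 * cnj (Complex X3 Y3))"
        unfolding w_def by (simp add: algebra_simps)
      then show ?thesis using H'(4-6) by simp
    qed
    have "(Re w)^2 + (Im w)^2 = 1" using unit_re_im[OF nw] .
    then show "Q \<in> {P. (fst P)^2 / A5^2 + (snd P)^2 / B5^2 = 1}"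
      unfolding TC using A5p B5p by (simp add: power_mult_distrib)
  next
    fix Q assume "Q \<in> {P. (fst P)^2 / A5^2 + (snd P)^2 / B5^2 = 1}"
    then have QE: "(fst Q)^2 / A5^2 + (snd Q)^2 / B5^2 = 1" by simp
    define w where "w = Complex (fst Q / A5) (snd Q / B5)"
    have nw: "w * cnj w = 1" unfolding w_def complex_mult_cnj using QE by (simp add: power_divide)
    obtain u1 u2 u3 where U: "u1 \<noteq> u2" "u1 \<noteq> u3" "u2 \<noteq> u3"
     "u1 * cnj u1 = 1" "u2 * cnj u2 = 1" "u3 * cnj u3 = 1"
     "u1^3 - of_real D * w * u1^2 - of_real D * u1 + w = 0"
     "u2^3 - of_real D * w * u2^2 - of_real D * u2 + w = 0"
     "u3^3 - of_real D * w * u3^2 - of_real D * u3 + w = 0"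
      using roots[OF DF(1) DF(2) nw] by blast
    have f: "\<And>u. u^3 - of_real D * w * u^2 - of_real D * u + w = u^3 + (- of_real D * w) * u^2 + (- of_real D) * u + w"
      by (simp add: algebra_simps)
    note V = vieta3[OF U(1-3) U(7)[unfolded f] U(8)[unfolded f] U(9)[unfolded f]]
    have e1: "u1+u2+u3 = of_real D * w" using arg_cong[OF V(1), of uminus] by simp
    have e2: "u1*u2+u1*u3+u2*u3 = - of_real D" using V(2) by simp
    have e3: "u1*u2*u3 = - w" using V(3) by simp
    note C = core[OF b0 ba DD U(1-6) e1 e2 e3]
    have "Q = tri_center h5 (a*Re u1, b*Im u1) (a*Re u2, b*Im u2) (a*Re u3, b*Im u3)"
      unfolding C(2) A5_def[symmetric] B5_def[symmetric] w_def using A5p B5p by (simp add: prod_eq_iff)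
    then show "Q \<in> locus h5 a b" unfolding locus_def using C(1) by blast
  qed
  then show ?thesis unfolding Let_def AE BE .
qed


end
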